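(* Let $\rho$ be a congruence on $\mathcal{OR}_n$ and let $\sigma\in\mathcal{OR}_n$ with $\mathrm{rk}(\sigma)=k$. Suppose there exists $\tau\in\mathcal{OR}_n$ with $\tau\neq\sigma$ and $\tau\,\rho\,\sigma$. Then: if $k=n$, $\rho(0)\supseteq\mathcal I_m^{\rm I}$ or $\rho(0)\supseteq\mathcal I_m^{\rm II}$; if $0\le k\le m$, $\rho(0)\supseteq\mathcal I_{k-1}$, where $\mathcal I_{-1}=\emptyset$.
   Context: Let $m\ge 1$, $n=2m$, $\mathbf n=\{1,\dots,n\}$, $\theta(i)=n+1-i$, written $\bar i$. A proper subset $I\subset\mathbf n$ is admissible if $I\cap\theta(I)=\emptyset$; $\mathbf n$ and $\emptyset$ are also admissible. For an injective partial map $\sigma$ of $\mathbf n$, $I(\sigma)$ is its domain, $J(\sigma)$ its image, $\mathrm{rk}(\sigma)=|I(\sigma)|$; products are compositions of partial maps. $W=\{\sigma\in S_n:\sigma(\bar i)=\overline{\sigma(i)}\ \forall i\}$, $W'=\{\sigma\in W:|\sigma(\{1,\dots,m\})\cap\{m+1,\dots,n\}|\text{ even}\}$. An admissible $m$-subset is of type I if it contains an even number of elements $>m$, type II otherwise. $\mathcal{OR}_n$ consists of the injective partial maps $\sigma$ with: $\mathrm{rk}(\sigma)<m$ and $I(\sigma),J(\sigma)$ admissible; or $\mathrm{rk}(\sigma)=m$ and $I(\sigma),J(\sigma)$ admissible of the same type; or $\sigma\in W'$. For $\mathrm{rk}(\sigma)=m$, $\mathrm{tp}(\sigma)$ is the type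 of $I(\sigma)$. $\mathcal I_k=\{\sigma:\mathrm{rk}(\sigma)\le k\}$ for $k\in\{0,\dots,m-1,n\}$; $\mathcal I_m^{\rm I}=\{\sigma:\mathrm{rk}(\sigma)<m$, or $\mathrm{rk}(\sigma)=m$ and $\mathrm{tp}(\sigma)={\rm I}\}$, $\mathcal I_m^{\rm II}$ likewise with type II. $0$ is the empty map and $\rho(0)$ its $\rho$-class. *)

theory Defs
  imports Main
begin

text \<open>Partial maps of n = {1..2m} are represented as nat \<Rightarrow> nat option.
  Throughout, m is the parameter and n = 2*m.\<close>

definition theta :: "nat \<Rightarrow> nat \<Rightarrow> nat" where
  "theta m i = 2*m + 1 - i"

definition pinj :: "nat \<Rightarrow> (nat \<Rightarrow> nat option) \<Rightarrow> bool" where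
  "pinj m \<sigma> \<longleftrightarrow> dom \<sigma> \<subseteq> {1..2*m} \<and> ran \<sigma> \<subseteq> {1..2*m} \<and> inj_on \<sigma> (dom \<sigma>)"

definition rk :: "(nat \<Rightarrow> nat option) \<Rightarrow> nat" where
  "rk \<sigma> = card (dom \<sigma>)"

definition admissible :: "nat \<Rightarrow> nat set \<Rightarrow> bool" where
  "admissible m I \<longleftrightarrow> I = {1..2*m} \<or> I = {} \<or>
     (I \<subset> {1..2*m} \<and> I \<inter> theta m ` I = {})"

definition typeI :: "nat \<Rightarrow> nat set \<Rightarrow> bool" where
  "typeI m S \<longleftrightarrow> even (card {x\<in>S. x > m})"

definition Wgrp :: "nat \<Rightarrow> (nat \<Rightarrow> nat option) set" where
  "Wgrp m = {\<sigma>. pinj m \<sigma> \<and> dom \<sigma> = {1..2*m} \<and> ran \<sigma> = {1..2*m} \<and>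
      (\<forall>i\<in>{1..2*m}. \<sigma> (theta m i) = map_option (theta m) (\<sigma> i))}"

definition Wprime :: "nat \<Rightarrow> (nat \<Rightarrow> nat option) set" where
  "Wprime m = {\<sigma>\<in>Wgrp m. even (card ({y. \<exists>x\<in>{1..m}. \<sigma> x = Some y} \<inter> {m+1..2*m}))}"

definition OR :: "nat \<Rightarrow> (nat \<Rightarrow> nat option) set" where
  "OR m = {\<sigma>. pinj m \<sigma> \<and>
     ((rk \<sigma> < m \<and> admissible m (dom \<sigma>) \<and> admissible m (ran \<sigma>))
      \<or> (rk \<sigma> = m \<and> admissible m (dom \<sigma>) \<and> admissible m (ran \<sigma>)
          \<and> (typeI m (dom \<sigma>) \<longleftrightarrow> typeI m (ran \<sigma>)))
      \<or> \<sigma> \<in> Wprime m)}"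

definition pmul :: "(nat \<Rightarrow> nat option) \<Rightarrow> (nat \<Rightarrow> nat option) \<Rightarrow> (nat \<Rightarrow> nat option)" where
  "pmul \<sigma> \<tau> = \<tau> \<circ>\<^sub>m \<sigma>"

definition congruence_OR :: "nat \<Rightarrow> ((nat \<Rightarrow> nat option) \<times> (nat \<Rightarrow> nat option)) set \<Rightarrow> bool" where
  "congruence_OR m \<rho> \<longleftrightarrow> equiv (OR m) \<rho> \<and>
     (\<forall>a b c. (a, b) \<in> \<rho> \<and> c \<in> OR m \<longrightarrow> (pmul c a, pmul c b) \<in> \<rho> \<and> (pmul a c, pmul b c) \<in> \<rho>)"

definition Ik :: "nat \<Rightarrow> nat \<Rightarrow> (nat \<Rightarrow> nat option) set" where
  "Ik m k = {\<sigma>\<in>OR m. rk \<sigma> \<le> k}"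

definition Im_I :: "nat \<Rightarrow> (nat \<Rightarrow> nat option) set" where
  "Im_I m = {\<sigma>\<in>OR m. rk \<sigma> < m \<or> (rk \<sigma> = m \<and> typeI m (dom \<sigma>))}"

definition Im_II :: "nat \<Rightarrow> (nat \<Rightarrow> nat option) set" where
  "Im_II m = {\<sigma>\<in>OR m. rk \<sigma> < m \<or> (rk \<sigma> = m \<and> \<not> typeI m (dom \<sigma>))}"

end

theory Submission
  imports Defs
begin


definition idm :: "nat set \<Rightarrow> (nat \<Rightarrow> nat option)" where
  "idm B = (\<lambda>z. if z \<in> B then Some z else None)"

definition tfree :: "nat \<Rightarrow> nat set \<Rightarrow> bool" where
  "tfree m B \<longleftrightarrow> B \<subseteq> {1..2*m} \<and> B \<inter> theta m ` B = {}"

definition pinv :: "(nat \<Rightarrow> nat option) \<Rightarrow> (nat \<Rightarrow> nat option)" where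
  "pinv f = (\<lambda>y. if y \<in> ran f then Some (THE x. f x = Some y) else None)"

lemma theta_in: "i \<in> {1..2*m} \<Longrightarrow> theta m i \<in> {1..2*m}"
  by (auto simp: theta_def)
lemma theta_theta: "i \<in> {1..2*m} \<Longrightarrow> theta m (theta m i) = i"
  by (auto simp: theta_def)
lemma theta_neq: "theta m i \<noteq> i"
  unfolding theta_def by presburger

lemma tfree_subset: "tfree m C \<Longrightarrow> B \<subseteq> C \<Longrightarrow> tfree m B"
  by (auto simp: tfree_def)
lemma tfree_finite: "tfree m C \<Longrightarrow> finite C"
  by (auto simp: tfree_def intro: finite_subset)
lemma tfree_iff: "tfree m B \<longleftrightarrow> B \<subseteq> {1..2*m} \<and> (\<forall>x\<in>B. theta m x \<notin> B)"
  by (auto simp: tfree_def)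

lemma admissible_tfree:
  assumes "m \<ge> 1" "admissible m I" "card I \<le> m" shows "tfree m I"
proof -
  have "I \<noteq> {1..2*m}" using assms by auto
  then show ?thesis using assms(2) by (auto simp: admissible_def tfree_def)
qed

lemma tfree_admissible:
  assumes "m \<ge> 1" "tfree m I" "card I \<le> m" shows "admissible m I"
proof -
  have "I \<noteq> {1..2*m}" using assms by auto
  then show ?thesis using assms(2) by (auto simp: admissible_def tfree_def)
qed

lemma dom_idm[simp]: "dom (idm B) = B" by (auto simp: idm_def dom_def)
lemma ran_idm[simp]: "ran (idm B) = B" by (auto simp: idm_def ran_def)
lemma idm_empty[simp]: "idm {} = Map.empty" by (auto simp: idm_def)
lemma idm_comp: "pmul (idm F) (idm G) = idm (F \<inter> G)"
  by (auto simp: pmul_def idm_def map_comp_def)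
lemma pmul_empty1[simp]: "pmul Map.empty a = Map.empty" by (auto simp: pmul_def)
lemma pmul_empty2[simp]: "pmul a Map.empty = Map.empty" by (auto simp: pmul_def map_comp_def split: option.splits)
lemma rk_idm: "rk (idm B) = card B" by (simp add: rk_def)

lemma idm_OR:
  assumes "m \<ge> 1" "tfree m B" "card B \<le> m" shows "idm B \<in> OR m"
proof -
  have p: "pinj m (idm B)" unfolding pinj_def using assms(2)
    by (simp add: tfree_def, auto simp: inj_on_def idm_def)
  have a: "admissible m B" using tfree_admissible assms by auto
  show ?thesis
  proof (cases "card B < m")
    case True then show ?thesis using p a by (simp add: OR_def rk_idm)
  next
    case False then show ?thesis using p a assms(3) by (simp add: OR_def rk_idm)
  qed
qed

lemma pinj_finite: "pinj m f \<Longrightarrow> finite (dom f)"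
  by (auto simp: pinj_def intro: finite_subset)

lemma pinv_apply: "inj_on f (dom f) \<Longrightarrow> f x = Some y \<Longrightarrow> pinv f y = Some x"
  unfolding pinv_def
  apply (auto simp: ran_def)
  apply (rule the_equality, simp)
  by (metis domI inj_onD)

lemma pinv_Some: "inj_on f (dom f) \<Longrightarrow> pinv f y = Some x \<Longrightarrow> f x = Some y"
proof -
  assume i: "inj_on f (dom f)" and p: "pinv f y = Some x"
  then have "y \<in> ran f" by (auto simp: pinv_def split: if_splits)
  then obtain a where a: "f a = Some y" by (auto simp: ran_def)
  then have "pinv f y = Some a" using pinv_apply[OF i] by simp
  then show ?thesis using a p by simp
qed

lemma pinv_iff: "inj_on f (dom f) \<Longrightarrow> pinv f y = Some x \<longleftrightarrow> f x = Some y"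
  using pinv_apply pinv_Some by metis

lemma dom_pinv: "dom (pinv f) = ran f" by (auto simp: pinv_def dom_def)
lemma ran_pinv: "inj_on f (dom f) \<Longrightarrow> ran (pinv f) = dom f"
  by (auto simp: ran_def pinv_iff)
lemma inj_pinv: "inj_on f (dom f) \<Longrightarrow> inj_on (pinv f) (dom (pinv f))"
proof (rule inj_onI)
  fix x y assume i: "inj_on f (dom f)" and x: "x \<in> dom (pinv f)" and y: "y \<in> dom (pinv f)"
    and e: "pinv f x = pinv f y"
  from x obtain a where a: "pinv f x = Some a" by auto
  then have "f a = Some x" using pinv_Some[OF i] by auto
  moreover have "f a = Some y" using pinv_Some[OF i] a e by auto
  ultimately show "x = y" by simp
qed

lemma card_ran: "inj_on f (dom f) \<Longrightarrow> card (ran f) = card (dom f)"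
proof -
  assume i: "inj_on f (dom f)"
  have "ran f = (the \<circ> f) ` dom f" by (force simp: ran_def dom_def)
  moreover have "inj_on (the \<circ> f) (dom f)" using i unfolding inj_on_def
    by (auto simp: dom_def)
  ultimately show ?thesis using card_image by metis
qed

lemma pinv_comp: "inj_on f (dom f) \<Longrightarrow> pmul f (pinv f) = idm (dom f)"
  by (rule ext) (auto simp: pmul_def idm_def map_comp_def pinv_apply split: option.splits)

lemma pinj_pinv: "pinj m f \<Longrightarrow> pinj m (pinv f)"
  using inj_pinv[of f] by (simp add: pinj_def dom_pinv ran_pinv)

lemma rk_pinv: "pinj m f \<Longrightarrow> rk (pinv f) = rk f"
  by (simp add: pinj_def rk_def dom_pinv card_ran)

lemma OR_small:
  assumes "m \<ge> 1" "\<sigma> \<in> OR m" "rk \<sigma> \<le> m"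
  shows "pinj m \<sigma> \<and> admissible m (dom \<sigma>) \<and> admissible m (ran \<sigma>) \<and>
         (rk \<sigma> = m \<longrightarrow> (typeI m (dom \<sigma>) \<longleftrightarrow> typeI m (ran \<sigma>)))"
proof -
  have "\<sigma> \<notin> Wprime m"
  proof
    assume "\<sigma> \<in> Wprime m"
    then have "dom \<sigma> = {1..2*m}" by (auto simp: Wprime_def Wgrp_def)
    then show False using assms by (simp add: rk_def)
  qed
  then show ?thesis using assms(2) by (auto simp: OR_def)
qed

lemma pinv_OR:
  assumes "m \<ge> 1" "\<sigma> \<in> OR m" "rk \<sigma> \<le> m"
  shows "pinv \<sigma> \<in> OR m"
proof -
  note h = OR_small[OF assms]
  then have i: "inj_on \<sigma> (dom \<sigma>)" by (simp add: pinj_def)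
  have r: "rk (pinv \<sigma>) = rk \<sigma>" using h rk_pinv by auto
  show ?thesis using h r i pinj_pinv[of m \<sigma>] assms(3)
    by (auto simp: OR_def dom_pinv ran_pinv)
qed



lemma cg_L: "congruence_OR m \<rho> \<Longrightarrow> (a,b) \<in> \<rho> \<Longrightarrow> c \<in> OR m \<Longrightarrow> (pmul c a, pmul c b) \<in> \<rho>"
  by (simp add: congruence_OR_def)
lemma cg_R: "congruence_OR m \<rho> \<Longrightarrow> (a,b) \<in> \<rho> \<Longrightarrow> c \<in> OR m \<Longrightarrow> (pmul a c, pmul b c) \<in> \<rho>"
  by (simp add: congruence_OR_def)
lemma cg_OR: "congruence_OR m \<rho> \<Longrightarrow> (a,b) \<in> \<rho> \<Longrightarrow> a \<in> OR m \<and> b \<in> OR m"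
  by (auto simp: congruence_OR_def equiv_def)
lemma cg_refl: "congruence_OR m \<rho> \<Longrightarrow> a \<in> OR m \<Longrightarrow> (a,a) \<in> \<rho>"
  by (auto simp: congruence_OR_def equiv_def refl_on_def)
lemma cg_sym: "congruence_OR m \<rho> \<Longrightarrow> (a,b) \<in> \<rho> \<Longrightarrow> (b,a) \<in> \<rho>"
  by (auto simp: congruence_OR_def equiv_def dest: symD)
lemma cg_trans: "congruence_OR m \<rho> \<Longrightarrow> (a,b) \<in> \<rho> \<Longrightarrow> (b,c) \<in> \<rho> \<Longrightarrow> (a,c) \<in> \<rho>"
  by (auto simp: congruence_OR_def equiv_def dest: transD)

lemma pmul_idm_dom: "dom g \<subseteq> D \<Longrightarrow> pmul (idm D) g = g"
proof (rule ext)
  fix x assume d: "dom g \<subseteq> D"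
  show "pmul (idm D) g x = g x"
  proof (cases "x \<in> D")
    case True then show ?thesis by (simp add: pmul_def idm_def map_comp_def)
  next
    case False then have "g x = None" using d by auto
    then show ?thesis using False by (simp add: pmul_def idm_def map_comp_def)
  qed
qed
lemma pmul_idm_ran: "ran g \<subseteq> R \<Longrightarrow> pmul g (idm R) = g"
  by (rule ext) (auto simp: pmul_def idm_def map_comp_def split: option.splits dest: ranI)

lemma idm_OR_sub:
  "m \<ge> 1 \<Longrightarrow> tfree m C \<Longrightarrow> card C \<le> m \<Longrightarrow> F \<subseteq> C \<Longrightarrow> idm F \<in> OR m"
  by (meson idm_OR tfree_subset tfree_finite card_mono le_trans)

lemma sub0:
  assumes cg: "congruence_OR m \<rho>" and m: "m \<ge> 1" and t: "tfree m C" and c: "card C \<le> m"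
    and r: "(idm C, Map.empty) \<in> \<rho>" and F: "F \<subseteq> C"
  shows "(idm F, Map.empty) \<in> \<rho>"
proof -
  have "(pmul (idm F) (idm C), pmul (idm F) Map.empty) \<in> \<rho>"
    using cg_L[OF cg r idm_OR_sub[OF m t c F]] .
  moreover have "F \<inter> C = F" using F by auto
  ultimately show ?thesis by (simp add: idm_comp)
qed

lemma lemX:
  assumes cg: "congruence_OR m \<rho>" and m: "m \<ge> 1" and t: "tfree m (insert w A)"
    and c: "card (insert w A) \<le> m" and w: "w \<notin> A"
    and r: "(idm A, idm (insert w A)) \<in> \<rho>"
  shows "(idm (insert w A), Map.empty) \<in> \<rho>"
proof -
  define C where "C = insert w A"
  have fA: "finite A" using tfree_finite[OF t] by simp
  have ORs: "\<And>F. F \<subseteq> C \<Longrightarrow> idm F \<in> OR m" using idm_OR_sub[OF m t c] C_def by simp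
  have step: "(idm A, idm (insert w (A - {x}))) \<in> \<rho>" if x: "x \<in> A" for x
  proof -
    define sw where "sw z = (if z = x then w else if z = w then x else z)" for z
    define p where "p = (\<lambda>z. if z \<in> C then Some (sw z) else None)"
    have xw: "x \<noteq> w" using x w by auto
    have swC: "sw z \<in> C" if "z \<in> C" for z using that x by (auto simp: sw_def C_def)
    have swsw: "sw (sw z) = z" for z by (auto simp: sw_def)
    have dp: "dom p = C" by (auto simp: p_def dom_def)
    have rp: "ran p = C"
    proof
      show "ran p \<subseteq> C" using swC by (auto simp: p_def ran_def)
      show "C \<subseteq> ran p"
      proof
        fix z assume "z \<in> C"
        then have "p (sw z) = Some z" using swC swsw by (simp add: p_def)
        then show "z \<in> ran p" by (auto simp: ran_def)
      qed
    qed
    have ip: "inj_on p (dom p)" unfolding inj_on_def dp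
      by (auto simp: p_def) (metis swsw)
    have Csub: "C \<subseteq> {1..2*m}" using t by (simp add: tfree_def C_def)
    have pj: "pinj m p" using dp rp ip Csub by (simp add: pinj_def)
    have rkp: "rk p = card C" by (simp add: rk_def dp)
    have aC: "admissible m C" using tfree_admissible[OF m t c] C_def by simp
    have pOR: "p \<in> OR m"
    proof (cases "card C < m")
      case True then show ?thesis using pj rkp aC dp rp by (simp add: OR_def)
    next
      case False then show ?thesis using pj rkp aC dp rp c C_def by (simp add: OR_def)
    qed
    have e1: "pmul p (pmul (idm A) p) = idm (insert w (A - {x}))"
      by (rule ext) (auto simp: pmul_def map_comp_def idm_def p_def sw_def C_def xw w x)
    have e2: "pmul p (pmul (idm C) p) = idm C"
      by (rule ext) (auto simp: pmul_def map_comp_def idm_def p_def swC swsw)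
    have "(pmul p (pmul (idm A) p), pmul p (pmul (idm C) p)) \<in> \<rho>"
      using cg_L[OF cg cg_R[OF cg r[folded C_def] pOR] pOR] .
    then have "(idm (insert w (A - {x})), idm C) \<in> \<rho>" using e1 e2 by simp
    then show ?thesis using r C_def cg_trans[OF cg] cg_sym[OF cg] by metis
  qed
  have step2: "(idm F, idm (F - {x})) \<in> \<rho>" if F: "F \<subseteq> A" and x: "x \<in> A" for F x
  proof -
    have "(pmul (idm F) (idm A), pmul (idm F) (idm (insert w (A - {x})))) \<in> \<rho>"
      using cg_L[OF cg step[OF x] ORs] F C_def by auto
    moreover have "F \<inter> A = F" using F by auto
    moreover have "F \<inter> insert w (A - {x}) = F - {x}" using F w by auto
    ultimately show ?thesis by (simp add: idm_comp)
  qed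
  have all: "F \<subseteq> A \<longrightarrow> (idm F, Map.empty) \<in> \<rho>" if "finite F" for F
    using that
  proof (induction F rule: finite_induct)
    case empty
    show ?case using cg_refl[OF cg, of "Map.empty"] ORs[of "{}"] by simp
  next
    case (insert x F)
    show ?case
    proof
      assume s: "insert x F \<subseteq> A"
      then have "(idm (insert x F), idm (insert x F - {x})) \<in> \<rho>" using step2[of "insert x F" x] by auto
      moreover have "insert x F - {x} = F" using insert by auto
      ultimately show "(idm (insert x F), Map.empty) \<in> \<rho>"
        using insert s cg_trans[OF cg] by auto
    qed
  qed
  have "(idm A, Map.empty) \<in> \<rho>" using all fA by simp
  then show ?thesis using r cg_trans[OF cg] cg_sym[OF cg] by metis
qed

lemma lemX2:
  assumes cg: "congruence_OR m \<rho>" and m: "m \<ge> 1" and t: "tfree m C"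
    and c: "card C \<le> m" and A: "A \<subset> C"
    and r: "(idm A, idm C) \<in> \<rho>"
  shows "(idm C, Map.empty) \<in> \<rho>"
proof -
  obtain x where x: "x \<in> C" "x \<notin> A" using A by auto
  define A' where "A' = C - {x}"
  have "(pmul (idm A') (idm A), pmul (idm A') (idm C)) \<in> \<rho>"
    using cg_L[OF cg r idm_OR_sub[OF m t c]] A'_def by auto
  moreover have "A' \<inter> A = A" "A' \<inter> C = A'" using A x A'_def by auto
  ultimately have "(idm A, idm A') \<in> \<rho>" by (simp add: idm_comp)
  then have r2: "(idm A', idm C) \<in> \<rho>" using r cg_trans[OF cg] cg_sym[OF cg] by metis
  have C: "C = insert x A'" using x A'_def by auto
  have t2: "tfree m (insert x A')" using t C by simp
  have c2: "card (insert x A') \<le> m" using c C by simp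
  have x2: "x \<notin> A'" by (simp add: A'_def)
  have r3: "(idm A', idm (insert x A')) \<in> \<rho>" using r2 C by simp
  have "(idm (insert x A'), Map.empty) \<in> \<rho>" using lemX[OF cg m t2 c2 x2 r3] .
  then show ?thesis using C by simp
qed

lemma L1:
  assumes cg: "congruence_OR m \<rho>" and m: "m \<ge> 1" and t: "tfree m B"
    and c: "card B \<le> m" and r: "(idm B, g) \<in> \<rho>" and d: "dom g \<subset> B"
  shows "(idm B, Map.empty) \<in> \<rho>"
proof -
  have "(pmul (idm (dom g)) (idm B), pmul (idm (dom g)) g) \<in> \<rho>"
    using cg_L[OF cg r idm_OR_sub[OF m t c]] d by auto
  moreover have "dom g \<inter> B = dom g" using d by auto
  ultimately have "(idm (dom g), g) \<in> \<rho>" by (simp add: idm_comp pmul_idm_dom)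
  then have "(idm (dom g), idm B) \<in> \<rho>" using r cg_trans[OF cg] cg_sym[OF cg] by metis
  then show ?thesis using lemX2[OF cg m t c d] by simp
qed

lemma L2:
  assumes cg: "congruence_OR m \<rho>" and m: "m \<ge> 1" and t: "tfree m B"
    and c: "card B \<le> m" and r: "(idm B, g) \<in> \<rho>" and d: "dom g \<subseteq> B" and rg: "ran g \<subseteq> B"
    and x: "x \<in> B" and gx: "g x = Some y" and yx: "y \<noteq> x" and ig: "inj_on g (dom g)"
  shows "(idm (B - {x}), Map.empty) \<in> \<rho>"
proof -
  define g' where "g' = pmul (idm (B - {x})) g"
  have "(pmul (idm (B - {x})) (idm B), g') \<in> \<rho>"
    using cg_L[OF cg r idm_OR_sub[OF m t c]] g'_def by auto
  then have r1: "(idm (B - {x}), g') \<in> \<rho>" by (simp add: idm_comp Int_absorb2 Diff_subset)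
  define R where "R = ran g'"
  have RB: "R \<subseteq> B" using rg by (auto simp: R_def g'_def pmul_def map_comp_def idm_def ran_def split: if_splits)
  have "(pmul (idm (B - {x})) (idm R), pmul g' (idm R)) \<in> \<rho>"
    using cg_R[OF cg r1 idm_OR_sub[OF m t c RB]] .
  then have "(idm ((B - {x}) \<inter> R), g') \<in> \<rho>" by (simp add: idm_comp pmul_idm_ran R_def)
  then have r2: "(idm ((B - {x}) \<inter> R), idm (B - {x})) \<in> \<rho>"
    using r1 cg_trans[OF cg] cg_sym[OF cg] by metis
  have yB: "y \<in> B - {x}" using gx rg yx by (auto simp: ran_def)
  have yR: "y \<notin> R"
  proof
    assume "y \<in> R"
    then obtain z where z: "g' z = Some y" by (auto simp: R_def ran_def)
    then have zB: "z \<in> B - {x}" and gz: "g z = Some y"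
      by (auto simp: g'_def pmul_def map_comp_def idm_def split: if_splits)
    then have "z = x" using ig gx by (auto simp: inj_on_def dom_def)
    then show False using zB by simp
  qed
  have sub: "(B - {x}) \<inter> R \<subset> B - {x}" using yB yR by auto
  have t': "tfree m (B - {x})" using tfree_subset[OF t] by auto
  have c': "card (B - {x}) \<le> m" using c tfree_finite[OF t]
    by (meson card_mono Diff_subset le_trans)
  show ?thesis using lemX2[OF cg m t' c' sub r2] .
qed

lemma lemZ:
  assumes cg: "congruence_OR m \<rho>" and m: "m \<ge> 1" and t: "tfree m C"
    and c: "card C \<le> m" and r: "(idm C, Map.empty) \<in> \<rho>" and p: "\<pi> \<in> OR m"
    and cP: "card (dom \<pi>) \<le> card C"
    and ty: "card (dom \<pi>) = m \<longrightarrow> (typeI m (dom \<pi>) \<longleftrightarrow> typeI m C)"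
  shows "(Map.empty, \<pi>) \<in> \<rho>"
proof -
  define P where "P = dom \<pi>"
  have rkp: "rk \<pi> \<le> m" using cP c by (simp add: rk_def)
  note h = OR_small[OF m p rkp]
  have fC: "finite C" using tfree_finite[OF t] .
  obtain F where F: "F \<subseteq> C" "card F = card P" using cP obtain_subset_with_card_n P_def by metis
  have Fm: "card P = m \<Longrightarrow> F = C"
    using F fC cP c P_def by (metis card_subset_eq le_antisym)
  have fP: "finite P" using h pinj_finite P_def by auto
  have fF: "finite F" using F fC finite_subset by auto
  obtain f where bf: "bij_betw f P F" using finite_same_card_bij[OF fP fF] F by auto
  define fh where "fh = (\<lambda>z. if z \<in> P then Some (f z) else None)"
  have dfh: "dom fh = P" by (auto simp: fh_def dom_def)
  have rfh: "ran fh = F"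
  proof -
    have "ran fh = f ` P" by (auto simp: fh_def ran_def)
    then show ?thesis using bf by (simp add: bij_betw_def)
  qed
  have ifh: "inj_on fh (dom fh)" using bf dfh
    by (auto simp: fh_def inj_on_def bij_betw_def)
  have tF: "tfree m F" using tfree_subset[OF t F(1)] .
  have cF: "card F \<le> m" using F cP c P_def by simp
  have pj: "pinj m fh" using dfh rfh ifh h tF by (auto simp: pinj_def P_def tfree_def)
  have aP: "admissible m P" using h P_def by simp
  have aF: "admissible m F" using tfree_admissible[OF m tF cF] .
  have rkf: "rk fh = card P" by (simp add: rk_def dfh)
  have fOR: "fh \<in> OR m"
  proof (cases "card P < m")
    case True then show ?thesis using pj rkf aP aF dfh rfh by (simp add: OR_def)
  next
    case False
    then have "card P = m" using cF F by simp
    then show ?thesis using pj rkf aP aF dfh rfh Fm ty P_def by (simp add: OR_def)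
  qed
  have iOR: "pinv fh \<in> OR m" using pinv_OR[OF m fOR] rkf cF F by simp
  have r0: "(idm F, Map.empty) \<in> \<rho>" using sub0[OF cg m t c r F(1)] .
  have "(pmul fh (pmul (idm F) (pinv fh)), Map.empty) \<in> \<rho>"
    using cg_L[OF cg cg_R[OF cg r0 iOR] fOR] by simp
  moreover have "pmul fh (pmul (idm F) (pinv fh)) = idm P"
  proof (rule ext)
    fix z show "pmul fh (pmul (idm F) (pinv fh)) z = idm P z"
    proof (cases "z \<in> P")
      case True
      then have "fh z = Some (f z)" by (simp add: fh_def)
      moreover then have "pinv fh (f z) = Some z" using pinv_apply[OF ifh] by simp
      moreover have "f z \<in> F" using bf True by (auto simp: bij_betw_def)
      ultimately show ?thesis using True by (simp add: pmul_def map_comp_def idm_def)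
    next
      case False then show ?thesis by (simp add: pmul_def map_comp_def idm_def fh_def)
    qed
  qed
  ultimately have "(idm P, Map.empty) \<in> \<rho>" by simp
  then have "(pmul (idm P) \<pi>, pmul Map.empty \<pi>) \<in> \<rho>" using cg_R[OF cg _ p] by blast
  then have "(\<pi>, Map.empty) \<in> \<rho>" by (simp add: pmul_idm_dom P_def)
  then show ?thesis using cg_sym[OF cg] by blast
qed



lemma tfree_ext:
  assumes t: "tfree m T" shows "\<exists>B. T \<subseteq> B \<and> tfree m B \<and> card B = m"
proof -
  define B where "B = T \<union> {i\<in>{1..m}. theta m i \<notin> T}"
  have T2: "T \<subseteq> {1..2*m}" and Tt: "\<And>z. z \<in> T \<Longrightarrow> theta m z \<notin> T" using t by (auto simp: tfree_iff)
  have B2: "B \<subseteq> {1..2*m}" using T2 by (auto simp: B_def)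
  have Bt: "theta m z \<notin> B" if z: "z \<in> B" for z
  proof (cases "z \<in> T")
    case True
    then have "theta m z \<notin> T" using Tt by simp
    moreover have "theta m (theta m z) = z" using True T2 theta_theta by auto
    ultimately show ?thesis using True by (auto simp: B_def)
  next
    case False
    then have "z \<in> {1..m}" "theta m z \<notin> T" using z by (auto simp: B_def)
    then show ?thesis by (auto simp: B_def theta_def)
  qed
  define phi where "phi z = min z (theta m z)" for z
  have inj: "inj_on phi B"
  proof (rule inj_onI)
    fix z z' assume z: "z \<in> B" and z': "z' \<in> B" and e: "phi z = phi z'"
    show "z = z'"
    proof (rule ccontr)
      assume ne: "z \<noteq> z'"
      have "z \<in> {1..2*m}" "z' \<in> {1..2*m}" using z z' B2 by auto
      then have "z' = theta m z" using e ne by (auto simp: phi_def theta_def)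
      then show False using Bt z z' by simp
    qed
  qed
  have img: "phi ` B = {1..m}"
  proof
    show "phi ` B \<subseteq> {1..m}"
    proof
      fix j assume "j \<in> phi ` B"
      then obtain z where "z \<in> B" "j = phi z" by auto
      moreover then have "z \<in> {1..2*m}" using B2 by auto
      ultimately show "j \<in> {1..m}" by (auto simp: phi_def theta_def)
    qed
    show "{1..m} \<subseteq> phi ` B"
    proof
      fix i assume i: "i \<in> {1..m}"
      show "i \<in> phi ` B"
      proof (cases "theta m i \<in> T")
        case True
        then have "theta m i \<in> B" by (simp add: B_def)
        moreover have "phi (theta m i) = i" using i by (auto simp: phi_def theta_def)
        ultimately show ?thesis by force
      next
        case False
        then have "i \<in> B" using i by (simp add: B_def)
        moreover have "phi i = i" using i by (auto simp: phi_def theta_def)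
        ultimately show ?thesis by force
      qed
    qed
  qed
  have "card B = m" using card_image[OF inj] img by simp
  moreover have "tfree m B" using B2 Bt by (simp add: tfree_iff)
  ultimately show ?thesis by (auto simp: B_def)
qed

lemma comp3: "pmul (pmul (idm B) f) h z = (if z \<in> B then (case f z of None \<Rightarrow> None | Some u \<Rightarrow> h u) else None)"
  by (simp add: pmul_def map_comp_def idm_def)

lemma OR_pinj: "\<sigma> \<in> OR m \<Longrightarrow> pinj m \<sigma>"
  by (simp add: OR_def)



lemma part_small:
  assumes m: "m \<ge> 1" and cg: "congruence_OR m \<rho>"
    and sO: "\<sigma> \<in> OR m" and rk: "rk \<sigma> = k" and k1: "1 \<le> k" and km: "k \<le> m"
    and tO: "\<tau> \<in> OR m" and ne: "\<tau> \<noteq> \<sigma>" and r: "(\<sigma>, \<tau>) \<in> \<rho>"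
  shows "\<exists>C. tfree m C \<and> card C \<le> m \<and> k - 1 \<le> card C \<and> (idm C, Map.empty) \<in> \<rho>"
proof -
  define D where "D = dom \<sigma>"
  have rkm: "rk \<sigma> \<le> m" using rk km by simp
  note h = OR_small[OF m sO rkm]
  have cD: "card D = k" using rk by (simp add: rk_def D_def)
  have tD: "tfree m D" using admissible_tfree[OF m] h cD km D_def by auto
  have isg: "inj_on \<sigma> (dom \<sigma>)" using h by (simp add: pinj_def)
  have pt: "pinj m \<tau>" using tO by (simp add: OR_def)
  then have it: "inj_on \<tau> (dom \<tau>)" by (simp add: pinj_def)
  have siOR: "pinv \<sigma> \<in> OR m" using pinv_OR[OF m sO rkm] .
  have DOR: "idm D \<in> OR m" using idm_OR[OF m tD] cD km by simp
  define g where "g = pmul (pmul (idm D) \<tau>) (pinv \<sigma>)"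
  have "(pmul (pmul (idm D) \<sigma>) (pinv \<sigma>), g) \<in> \<rho>"
    using cg_R[OF cg cg_L[OF cg r DOR] siOR] g_def by simp
  moreover have "pmul (pmul (idm D) \<sigma>) (pinv \<sigma>) = idm D"
    using pmul_idm_dom[of \<sigma> D] pinv_comp[OF isg] D_def by simp
  ultimately have r1: "(idm D, g) \<in> \<rho>" by simp
  have gc: "g z = (if z \<in> D then (case \<tau> z of None \<Rightarrow> None | Some u \<Rightarrow> pinv \<sigma> u) else None)" for z
    using comp3 g_def by simp
  have gS: "z \<in> D \<and> (\<exists>u. \<tau> z = Some u \<and> \<sigma> v = Some u)" if "g z = Some v" for z v
    using that gc[of z] pinv_Some[OF isg] by (auto split: if_splits option.splits)
  have dg: "dom g \<subseteq> D" using gS by auto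
  have rg: "ran g \<subseteq> D"
  proof
    fix v assume "v \<in> ran g"
    then obtain z where "g z = Some v" by (auto simp: ran_def)
    then obtain u where "\<sigma> v = Some u" using gS by blast
    then show "v \<in> D" by (auto simp: D_def)
  qed
  have ig: "inj_on g (dom g)"
  proof (rule inj_onI)
    fix z z' assume "z \<in> dom g" "z' \<in> dom g" and e: "g z = g z'"
    then obtain v where v: "g z = Some v" "g z' = Some v" by auto
    obtain u where u: "\<tau> z = Some u" "\<sigma> v = Some u" using gS[OF v(1)] by blast
    obtain u' where u': "\<tau> z' = Some u'" "\<sigma> v = Some u'" using gS[OF v(2)] by blast
    have "\<tau> z = \<tau> z'" using u u' by simp
    then show "z = z'" using it u(1) u'(1) by (metis domI inj_onD)
  qed
  show ?thesis
  proof (cases "dom g = D")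
    case False
    then have "dom g \<subset> D" using dg by auto
    then have "(idm D, Map.empty) \<in> \<rho>" using L1[OF cg m tD _ r1] cD km by simp
    then show ?thesis using tD cD km by auto
  next
    case dgD: True
    show ?thesis
    proof (cases "\<exists>x\<in>D. g x \<noteq> Some x")
      case True
      then obtain x where x: "x \<in> D" "g x \<noteq> Some x" by auto
      then obtain y where y: "g x = Some y" using dgD by auto
      then have yx: "y \<noteq> x" using x by auto
      have "(idm (D - {x}), Map.empty) \<in> \<rho>" using L2[OF cg m tD _ r1 dg rg x(1) y yx ig] cD km by simp
      moreover have "card (D - {x}) = k - 1" using cD x tfree_finite[OF tD] by simp
      moreover have "tfree m (D - {x})" using tfree_subset[OF tD] by auto
      ultimately show ?thesis using km by (metis diff_le_self le_trans order_refl)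
    next
      case False
      then have gid: "\<And>z. z \<in> D \<Longrightarrow> g z = Some z" by auto
      have agree: "\<tau> z = \<sigma> z" if z: "z \<in> D" for z
      proof -
        obtain u where "\<tau> z = Some u" "\<sigma> z = Some u" using gS[OF gid[OF z]] by blast
        then show ?thesis by simp
      qed
      obtain w where w: "\<tau> w \<noteq> \<sigma> w" using ne by auto
      have wD: "w \<notin> D" using agree w by auto
      then have sw: "\<sigma> w = None" by (auto simp: D_def)
      then obtain v where v: "\<tau> w = Some v" using w by auto
      have w2: "w \<in> {1..2*m}" using pt v by (auto simp: pinj_def)
      have Dne: "D \<noteq> {}" using cD k1 by auto
      define d0 where "d0 = (if theta m w \<in> D then theta m w else (SOME d. d \<in> D))"
      have d0D: "d0 \<in> D" using Dne by (auto simp: d0_def some_in_eq)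
      define A where "A = D - {d0}"
      define C where "C = insert w A"
      have fD: "finite D" using tfree_finite[OF tD] .
      have cA: "card A = k - 1" using cD d0D fD by (simp add: A_def)
      have wA: "w \<notin> A" using wD A_def by auto
      have cC: "card C = k" using cA wA fD k1 by (simp add: C_def A_def)
      have thwA: "theta m w \<notin> A" by (auto simp: A_def d0_def)
      have tC: "tfree m C"
        unfolding tfree_iff
      proof
        show "C \<subseteq> {1..2*m}" using tD w2 by (auto simp: C_def A_def tfree_def)
        show "\<forall>x\<in>C. theta m x \<notin> C"
        proof
          fix x assume x: "x \<in> C"
          show "theta m x \<notin> C"
          proof (cases "x = w")
            case True then show ?thesis using thwA theta_neq[of m w] by (auto simp: C_def)
          next
            case False
            then have xA: "x \<in> A" using x by (auto simp: C_def)
            then have x2: "x \<in> {1..2*m}" using tD by (auto simp: A_def tfree_def)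
            have "theta m x \<notin> A" using xA tD by (auto simp: A_def tfree_iff)
            moreover have "theta m x \<noteq> w" using thwA xA theta_theta[OF x2] by metis
            ultimately show ?thesis by (auto simp: C_def)
          qed
        qed
      qed
      have COR: "idm C \<in> OR m" using idm_OR[OF m tC] cC km by simp
      define t' where "t' = pmul (idm C) \<tau>"
      have r2: "(pmul (idm C) \<sigma>, t') \<in> \<rho>" using cg_L[OF cg r COR] t'_def by simp
      then have t'O: "t' \<in> OR m" using cg_OR[OF cg] by blast
      have t'c: "t' z = (if z \<in> C then \<tau> z else None)" for z
        by (simp add: t'_def pmul_def map_comp_def idm_def)
      have dt': "dom t' = C"
      proof
        show "dom t' \<subseteq> C" using t'c by (auto split: if_splits)
        show "C \<subseteq> dom t'"
        proof
          fix z assume z: "z \<in> C"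
          show "z \<in> dom t'"
          proof (cases "z = w")
            case True then show ?thesis using v z t'c by auto
          next
            case False then have "z \<in> D" using z by (auto simp: C_def A_def)
            then show ?thesis using agree[of z] t'c z by (auto simp: D_def)
          qed
        qed
      qed
      have rkt': "rk t' \<le> m" using dt' cC km by (simp add: rk_def)
      have it': "inj_on t' (dom t')" using OR_pinj[OF t'O] by (simp add: pinj_def)
      have tiO: "pinv t' \<in> OR m" using pinv_OR[OF m t'O rkt'] .
      have "(pmul (pmul (idm C) \<sigma>) (pinv t'), pmul t' (pinv t')) \<in> \<rho>"
        using cg_R[OF cg r2 tiO] .
      moreover have "pmul t' (pinv t') = idm C" using pinv_comp[OF it'] dt' by simp
      moreover have "pmul (pmul (idm C) \<sigma>) (pinv t') = idm A"
      proof (rule ext)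
        fix z
        show "pmul (pmul (idm C) \<sigma>) (pinv t') z = idm A z"
        proof (cases "z \<in> A")
          case True
          then have zD: "z \<in> D" "z \<in> C" by (auto simp: A_def C_def)
          then obtain u where u: "\<sigma> z = Some u" by (auto simp: D_def)
          then have "t' z = Some u" using t'c zD agree by simp
          then have "pinv t' u = Some z" using pinv_apply[OF it'] by simp
          then show ?thesis using comp3 u zD True by (simp add: idm_def)
        next
          case False
          then have "z \<notin> C \<or> z = w" by (auto simp: C_def)
          then show ?thesis using comp3 sw False by (auto simp: idm_def)
        qed
      qed
      ultimately have "(idm A, idm C) \<in> \<rho>" by simp
      moreover have "A \<subset> C" using C_def wA by auto
      ultimately have "(idm C, Map.empty) \<in> \<rho>" using lemX2[OF cg m tC] cC km by simp
      then show ?thesis using tC cC km by auto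
    qed
  qed
qed



lemma part_big:
  assumes m: "m \<ge> 1" and cg: "congruence_OR m \<rho>"
    and sO: "\<sigma> \<in> OR m" and rk: "rk \<sigma> = 2*m"
    and tO: "\<tau> \<in> OR m" and ne: "\<tau> \<noteq> \<sigma>" and r: "(\<sigma>, \<tau>) \<in> \<rho>"
  shows "\<exists>B. tfree m B \<and> card B = m \<and> (idm B, Map.empty) \<in> \<rho>"
proof -
  have "\<sigma> \<in> Wprime m" using sO rk m by (auto simp: OR_def)
  then have ps: "pinj m \<sigma>" and ds: "dom \<sigma> = {1..2*m}" and rs: "ran \<sigma> = {1..2*m}"
    by (auto simp: Wprime_def Wgrp_def)
  have isg: "inj_on \<sigma> (dom \<sigma>)" using ps by (simp add: pinj_def)
  have pt: "pinj m \<tau>" using tO by (simp add: OR_def)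
  obtain x where x: "\<tau> x \<noteq> \<sigma> x" using ne by auto
  have x2: "x \<in> {1..2*m}"
  proof (rule ccontr)
    assume "x \<notin> {1..2*m}"
    then have "\<sigma> x = None" "\<tau> x = None" using ds pt by (auto simp: pinj_def)
    then show False using x by simp
  qed
  have "x \<in> dom \<sigma>" using ds x2 by simp
  then obtain y where y: "\<sigma> x = Some y" by auto
  have uniq: "\<And>a b v. \<sigma> a = Some v \<Longrightarrow> \<sigma> b = Some v \<Longrightarrow> a = b"
    using isg by (metis domI inj_onD)
  have "\<exists>T. tfree m T \<and> x \<in> T \<and> (\<forall>v x'. \<tau> x = Some v \<longrightarrow> \<sigma> x' = Some v \<longrightarrow> theta m x' \<in> T \<or> x' = theta m x)"
  proof (cases "\<tau> x")
    case None
    have "tfree m {x}" using x2 theta_neq[of m x] by (simp add: tfree_iff)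
    then show ?thesis using None by auto
  next
    case (Some v)
    then have "v \<in> ran \<tau>" by (auto simp: ran_def)
    then have "v \<in> ran \<sigma>" using pt rs by (auto simp: pinj_def)
    then obtain x' where x': "\<sigma> x' = Some v" by (auto simp: ran_def)
    have x'2: "x' \<in> {1..2*m}" using x' ds by auto
    have xx': "x' \<noteq> x" using x' y x Some by auto
    show ?thesis
    proof (cases "x' = theta m x")
      case True
      have "tfree m {x}" using x2 theta_neq[of m x] by (simp add: tfree_iff)
      moreover have "\<forall>v' x''. \<tau> x = Some v' \<longrightarrow> \<sigma> x'' = Some v' \<longrightarrow> x'' = theta m x"
        using Some x' uniq True by auto
      ultimately show ?thesis by blast
    next
      case False
      have "theta m x \<noteq> theta m x'" using xx' theta_theta x2 x'2 by metis
      moreover have "theta m (theta m x') \<noteq> x" using theta_theta[OF x'2] xx' by simp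
      moreover have "theta m x \<noteq> x" "theta m (theta m x') \<noteq> theta m x'" using theta_neq by auto
      ultimately have "tfree m {x, theta m x'}" using x2 x'2 theta_in[OF x'2] by (simp add: tfree_iff)
      moreover have "\<forall>v' x''. \<tau> x = Some v' \<longrightarrow> \<sigma> x'' = Some v' \<longrightarrow> theta m x'' \<in> {x, theta m x'}"
        using Some x' uniq by auto
      ultimately show ?thesis by blast
    qed
  qed
  then obtain T where T: "tfree m T" "x \<in> T"
    and Tc: "\<And>v x'. \<tau> x = Some v \<Longrightarrow> \<sigma> x' = Some v \<Longrightarrow> theta m x' \<in> T \<or> x' = theta m x" by blast
  obtain B where B: "T \<subseteq> B" "tfree m B" "card B = m" using tfree_ext[OF T(1)] by blast
  have xB: "x \<in> B" using B T by auto
  have B2: "B \<subseteq> {1..2*m}" and Bt: "\<And>z. z \<in> B \<Longrightarrow> theta m z \<notin> B" using B(2) by (auto simp: tfree_iff)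
  have BOR: "idm B \<in> OR m" using idm_OR[OF m B(2)] B(3) by simp
  define sB where "sB = pmul (idm B) \<sigma>"
  have r2: "(sB, pmul (idm B) \<tau>) \<in> \<rho>" using cg_L[OF cg r BOR] sB_def by simp
  then have sBO: "sB \<in> OR m" using cg_OR[OF cg] by blast
  have sBc: "sB z = (if z \<in> B then \<sigma> z else None)" for z
    by (simp add: sB_def pmul_def map_comp_def idm_def)
  have dsB: "dom sB = B"
  proof
    show "dom sB \<subseteq> B" using sBc by (auto split: if_splits)
    show "B \<subseteq> dom sB"
    proof
      fix z assume z: "z \<in> B"
      then have "z \<in> dom \<sigma>" using B2 ds by auto
      then show "z \<in> dom sB" using sBc[of z] z by (simp add: dom_def)
    qed
  qed
  have rksB: "rk sB \<le> m" using dsB B(3) by (simp add: rk_def)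
  have isB: "inj_on sB (dom sB)" using OR_pinj[OF sBO] by (simp add: pinj_def)
  have hO: "pinv sB \<in> OR m" using pinv_OR[OF m sBO rksB] .
  define g where "g = pmul (pmul (idm B) \<tau>) (pinv sB)"
  have "(pmul sB (pinv sB), g) \<in> \<rho>" using cg_R[OF cg r2 hO] g_def by simp
  then have r3: "(idm B, g) \<in> \<rho>" using pinv_comp[OF isB] dsB by simp
  have gc: "g z = (if z \<in> B then (case \<tau> z of None \<Rightarrow> None | Some u \<Rightarrow> pinv sB u) else None)" for z
    using comp3 g_def by simp
  have dg: "dom g \<subseteq> B" using gc by (auto split: if_splits)
  have gx: "g x = None"
  proof (cases "\<tau> x")
    case None then show ?thesis using gc xB by simp
  next
    case (Some v)
    show ?thesis
    proof (rule ccontr)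
      assume "g x \<noteq> None"
      then obtain z where "pinv sB v = Some z" using gc xB Some by auto
      then have "sB z = Some v" using pinv_Some[OF isB] by simp
      then have zB: "z \<in> B" and sz: "\<sigma> z = Some v" using sBc[of z] by (auto split: if_splits)
      from Tc[OF Some sz] show False
      proof
        assume "theta m z \<in> T" then show False using B(1) Bt zB by auto
      next
        assume "z = theta m x" then show False using Bt xB zB by auto
      qed
    qed
  qed
  then have "dom g \<subset> B" using dg xB by auto
  then have "(idm B, Map.empty) \<in> \<rho>" using L1[OF cg m B(2) _ r3] B(3) by simp
  then show ?thesis using B by auto
qed

theorem lemma4p8:
  fixes m k :: nat and \<rho> :: "((nat \<Rightarrow> nat option) \<times> (nat \<Rightarrow> nat option)) set"
    and \<sigma> :: "nat \<Rightarrow> nat option"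
  assumes "m \<ge> 1"
    and "congruence_OR m \<rho>"
    and "\<sigma> \<in> OR m" and "rk \<sigma> = k"
    and "\<exists>\<tau>\<in>OR m. \<tau> \<noteq> \<sigma> \<and> (\<tau>, \<sigma>) \<in> \<rho>"
  shows "(k = 2*m \<longrightarrow> (Im_I m \<subseteq> \<rho> `` {Map.empty} \<or> Im_II m \<subseteq> \<rho> `` {Map.empty}))
       \<and> (k \<le> m \<longrightarrow> (k = 0 \<or> Ik m (k - 1) \<subseteq> \<rho> `` {Map.empty}))"
proof -
  note m = assms(1) and cg = assms(2)
  obtain \<tau> where tO: "\<tau> \<in> OR m" and ne: "\<tau> \<noteq> \<sigma>" and r0: "(\<tau>, \<sigma>) \<in> \<rho>" using assms(5) by blast
  have r: "(\<sigma>, \<tau>) \<in> \<rho>" using cg_sym[OF cg r0] .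
  have P1: "Im_I m \<subseteq> \<rho> `` {Map.empty} \<or> Im_II m \<subseteq> \<rho> `` {Map.empty}" if k: "k = 2*m"
  proof -
    obtain B where B: "tfree m B" "card B = m" "(idm B, Map.empty) \<in> \<rho>"
      using part_big[OF m cg assms(3) _ tO ne r] k assms(4) by blast
    show ?thesis
    proof (cases "typeI m B")
      case True
      have "Im_I m \<subseteq> \<rho> `` {Map.empty}"
      proof
        fix \<pi> assume "\<pi> \<in> Im_I m"
        then have p: "\<pi> \<in> OR m" and c: "rk \<pi> < m \<or> (rk \<pi> = m \<and> typeI m (dom \<pi>))" by (auto simp: Im_I_def)
        have "(Map.empty, \<pi>) \<in> \<rho>"
          using lemZ[OF cg m B(1) _ B(3) p] B(2) c True by (auto simp: rk_def)
        then show "\<pi> \<in> \<rho> `` {Map.empty}" by simp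
      qed
      then show ?thesis by simp
    next
      case False
      have "Im_II m \<subseteq> \<rho> `` {Map.empty}"
      proof
        fix \<pi> assume "\<pi> \<in> Im_II m"
        then have p: "\<pi> \<in> OR m" and c: "rk \<pi> < m \<or> (rk \<pi> = m \<and> \<not> typeI m (dom \<pi>))" by (auto simp: Im_II_def)
        have "(Map.empty, \<pi>) \<in> \<rho>"
          using lemZ[OF cg m B(1) _ B(3) p] B(2) c False by (auto simp: rk_def)
        then show "\<pi> \<in> \<rho> `` {Map.empty}" by simp
      qed
      then show ?thesis by simp
    qed
  qed
  have P2: "k = 0 \<or> Ik m (k - 1) \<subseteq> \<rho> `` {Map.empty}" if km: "k \<le> m"
  proof (cases "k = 0")
    case True then show ?thesis by simp
  next
    case False
    then have k1: "1 \<le> k" by simp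
    obtain C where C: "tfree m C" "card C \<le> m" "k - 1 \<le> card C" "(idm C, Map.empty) \<in> \<rho>"
      using part_small[OF m cg assms(3) assms(4) k1 km tO ne r] by blast
    have "Ik m (k - 1) \<subseteq> \<rho> `` {Map.empty}"
    proof
      fix \<pi> assume "\<pi> \<in> Ik m (k - 1)"
      then have p: "\<pi> \<in> OR m" and c: "rk \<pi> \<le> k - 1" by (auto simp: Ik_def)
      have "card (dom \<pi>) \<le> card C" using c C(3) by (simp add: rk_def)
      moreover have "card (dom \<pi>) \<noteq> m" using c km k1 by (simp add: rk_def)
      ultimately have "(Map.empty, \<pi>) \<in> \<rho>" using lemZ[OF cg m C(1) C(2) C(4) p] by simp
      then show "\<pi> \<in> \<rho> `` {Map.empty}" by simp
    qed
    then show ?thesis by simp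
  qed
  show ?thesis using P1 P2 by blast
qed


end
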